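(* Let $B\subset\mathbb{H}$ have horizontal super-linear growth, i.e. there are constants $c\in(0,\infty)$ and $M<\infty$ such that $h_{x_1}\ge |c x_1|$ for all integers $x_1$ with $|x_1|\ge M$, where $h_{x_1}=\sup\{x_2\ge 0:\ \{x_1\}\times\{1,2,\dots,x_2\}\subset B\}$. Then for every $x\in B$, $$\bar{\mathcal H}_B(x)=0.$$
   Context: $\mathbb{H}=\{(x_1,x_2)\in\mathbb{Z}^2:\ x_2\ge 0\}$ and $L_n=\{(x_1,n):x_1\in\mathbb{Z}\}$. $(S_n)_{n\ge0}$ is a simple random walk on $\mathbb{Z}^2$; $P_z$ denotes its law started at $z$. For $A\subset\mathbb{Z}^2$, $\bar\tau_A=\min\{n\ge0: S_n\in A\}$. For $B\subset\mathbb{H}$, $x\in B$ and $N\ge1$, define $$\bar{\mathcal H}_{B,N}(x)=\sum_{z\in L_N\setminus B}P_z\big(S_{\bar\tau_{B\cup L_0}}=x\big).$$ It is known that the limit $\bar{\mathcal H}_B(x)=\lim_{N\to\infty}\bar{\mathcal H}_{B,N}(x)$ exists and is finite for every $B\subset\mathbb{H}$ and $x\in B$; it is called the stationary harmonic measure of $x$ with respect to $B$. *)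

theory Defs
  imports "HOL-Probability.Probability"
begin

type_synonym pt = "int \<times> int"

definition upper_half :: "pt set" where
  "upper_half = {p. snd p \<ge> 0}"

definition hline :: "int \<Rightarrow> pt set" where
  "hline n = {p. snd p = n}"

definition srw_step :: "pt pmf" where
  "srw_step = pmf_of_set {(1,0), (-1,0), (0,1), (0,-1)}"

definition srw_space :: "pt stream measure" where
  "srw_space = stream_space (measure_pmf srw_step)"

definition walk :: "pt \<Rightarrow> pt stream \<Rightarrow> nat \<Rightarrow> pt" where
  "walk z w n = (fst z + (\<Sum>i<n. fst (w !! i)), snd z + (\<Sum>i<n. snd (w !! i)))"

definition hit_at :: "pt set \<Rightarrow> pt \<Rightarrow> pt \<Rightarrow> ennreal" where
  "hit_at A z x = emeasure srw_space
     {w \<in> space srw_space. \<exists>n. walk z w n \<in> A \<and> (\<forall>m<n. walk z w m \<notin> A) \<and> walk z w n = x}"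

definition harm_N :: "pt set \<Rightarrow> nat \<Rightarrow> pt \<Rightarrow> ennreal" where
  "harm_N B N x = (\<Sum>\<^sub>\<infinity>z \<in> hline (int N) - B. hit_at (B \<union> hline 0) z x)"

definition col_height :: "pt set \<Rightarrow> int \<Rightarrow> ereal" where
  "col_height B x1 = Sup {ereal (real_of_int x2) | x2. x2 \<ge> 0 \<and> (\<forall>y\<in>{1..x2}. (x1, y) \<in> B)}"

end

theory Submission
  imports Defs
begin


definition steps :: "pt set" where "steps = {(1,0), (-1,0), (0,1), (0,-1)}"
definition padd :: "pt \<Rightarrow> pt \<Rightarrow> pt" where "padd p e = (fst p + fst e, snd p + snd e)"

lemma walk_0[simp]: "walk z w 0 = z" by (simp add: walk_def)

lemma walk_Cons: "walk z (e ## w) (Suc n) = walk (padd z e) w n"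
  unfolding walk_def padd_def sum.lessThan_Suc_shift by simp

lemma walk_Suc: "walk z w (Suc n) = padd (walk z w n) (w !! n)"
  unfolding walk_def padd_def by simp

lemma prob_srw: "prob_space srw_space"
  unfolding srw_space_def by (rule prob_space.prob_space_stream_space) (rule prob_space_measure_pmf)

lemma meas_snth_cs: "(\<lambda>w. w !! i) \<in> measurable srw_space (count_space UNIV)"
  unfolding srw_space_def
  using measurable_snth[of i "measure_pmf srw_step"]
  by (simp add: measurable_cong_sets[OF refl sets_measure_pmf_count_space])

lemma meas_walk[measurable]: "(\<lambda>w. walk z w n) \<in> measurable srw_space (count_space UNIV)"
proof (induction n)
  case 0 then show ?case by simp
next
  case (Suc n)
  have "(\<lambda>w. (walk z w n, w !! n)) \<in> measurable srw_space (count_space UNIV \<Otimes>\<^sub>M count_space UNIV)"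
    using Suc meas_snth_cs by (intro measurable_Pair) auto
  then have "(\<lambda>w. (walk z w n, w !! n)) \<in> measurable srw_space (count_space (UNIV::(pt\<times>pt) set))"
    by (simp add: pair_measure_countable)
  then have "(\<lambda>w. case_prod padd (walk z w n, w !! n)) \<in> measurable srw_space (count_space UNIV)"
    by (rule measurable_compose) simp
  then show ?case by (simp add: walk_Suc)
qed

definition Evn :: "pt set \<Rightarrow> pt set \<Rightarrow> nat \<Rightarrow> pt \<Rightarrow> pt stream \<Rightarrow> bool" where
  "Evn D T n p w = (\<exists>k\<le>n. walk p w k \<in> T \<and> (\<forall>m<k. walk p w m \<in> D))"

definition Ev :: "pt set \<Rightarrow> pt set \<Rightarrow> pt \<Rightarrow> pt stream \<Rightarrow> bool" where
  "Ev D T p w = (\<exists>k. walk p w k \<in> T \<and> (\<forall>m<k. walk p w m \<in> D))"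

lemma sets_Evn[measurable]: "{w \<in> space srw_space. Evn D T n p w} \<in> sets srw_space"
  unfolding Evn_def by measurable

lemma sets_Ev[measurable]: "{w \<in> space srw_space. Ev D T p w} \<in> sets srw_space"
  unfolding Ev_def by measurable

lemma Evn_Cons: "Evn D T (Suc n) p (e ## w) \<longleftrightarrow> p \<in> T \<or> (p \<in> D \<and> Evn D T n (padd p e) w)"
proof
  assume "Evn D T (Suc n) p (e ## w)"
  then obtain k where k: "k \<le> Suc n" "walk p (e##w) k \<in> T" "\<forall>m<k. walk p (e##w) m \<in> D"
    unfolding Evn_def by auto
  show "p \<in> T \<or> (p \<in> D \<and> Evn D T n (padd p e) w)"
  proof (cases k)
    case 0 then show ?thesis using k by simp
  next
    case (Suc k')
    have "p \<in> D" using k(3) Suc by (metis walk_0 zero_less_Suc)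
    moreover have "Evn D T n (padd p e) w" unfolding Evn_def
    proof (intro exI conjI allI impI)
      show "k' \<le> n" using k Suc by simp
      show "walk (padd p e) w k' \<in> T" using k(2) Suc by (simp add: walk_Cons)
      fix m assume "m < k'" then show "walk (padd p e) w m \<in> D"
        using k(3) Suc by (metis Suc_mono walk_Cons)
    qed
    ultimately show ?thesis by simp
  qed
next
  assume "p \<in> T \<or> (p \<in> D \<and> Evn D T n (padd p e) w)"
  then show "Evn D T (Suc n) p (e ## w)"
  proof
    assume "p \<in> T" then show ?thesis unfolding Evn_def by (intro exI[of _ 0]) simp
  next
    assume a: "p \<in> D \<and> Evn D T n (padd p e) w"
    then obtain k where k: "k \<le> n" "walk (padd p e) w k \<in> T" "\<forall>m<k. walk (padd p e) w m \<in> D"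
      unfolding Evn_def by auto
    show ?thesis unfolding Evn_def
    proof (intro exI[of _ "Suc k"] conjI allI impI)
      show "Suc k \<le> Suc n" using k by simp
      show "walk p (e ## w) (Suc k) \<in> T" using k by (simp add: walk_Cons)
      fix m assume "m < Suc k" then show "walk p (e ## w) m \<in> D"
        using k a by (cases m) (auto simp: walk_Cons)
    qed
  qed
qed

lemma Evn_0: "Evn D T 0 p w \<longleftrightarrow> p \<in> T" unfolding Evn_def by simp

lemma srw_step_set: "set_pmf srw_step = steps" and steps_fin: "finite steps" and steps_card: "card steps = 4"
  unfolding srw_step_def steps_def by (auto simp: set_pmf_of_set)

lemma nn_int_step: "(\<integral>\<^sup>+e. f e \<partial>measure_pmf srw_step) = (\<Sum>e\<in>steps. f e) / 4"
  unfolding srw_step_def using nn_integral_pmf_of_set[of steps f] steps_fin steps_card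
  by (simp add: steps_def)

lemma space_srw: "space srw_space = UNIV"
  unfolding srw_space_def by (simp add: space_stream_space streams_UNIV)

lemma emeasure_srw_Cons:
  assumes "X \<in> sets srw_space"
  shows "emeasure srw_space X = (\<integral>\<^sup>+e. emeasure srw_space {w\<in>space srw_space. e ## w \<in> X} \<partial>measure_pmf srw_step)"
  using assms unfolding srw_space_def
  by (rule prob_space.emeasure_stream_space[OF prob_space_measure_pmf])

lemma Evn_bound:
  fixes G :: "pt \<Rightarrow> ennreal"
  assumes T: "\<forall>p\<in>T. 1 \<le> G p"
    and D: "\<forall>p\<in>D - T. (\<Sum>e\<in>steps. G (padd p e)) / 4 \<le> G p"
  shows "emeasure srw_space {w\<in>space srw_space. Evn D T n p w} \<le> G p"
proof (induction n arbitrary: p)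
  interpret prob_space srw_space by (rule prob_srw)
  case 0
  show ?case
  proof (cases "p \<in> T")
    case True
    have "emeasure srw_space {w\<in>space srw_space. Evn D T 0 p w} \<le> 1" by (rule emeasure_le_1)
    also have "\<dots> \<le> G p" using T True by auto
    finally show ?thesis .
  next
    case False then show ?thesis by (simp add: Evn_0)
  qed
next
  interpret prob_space srw_space by (rule prob_srw)
  case (Suc n)
  show ?case
  proof (cases "p \<in> T")
    case True
    have "emeasure srw_space {w\<in>space srw_space. Evn D T (Suc n) p w} \<le> 1" by (rule emeasure_le_1)
    also have "\<dots> \<le> G p" using T True by auto
    finally show ?thesis .
  next
    case nT: False
    have "emeasure srw_space {w\<in>space srw_space. Evn D T (Suc n) p w}
       = (\<integral>\<^sup>+e. emeasure srw_space {w\<in>space srw_space. e ## w \<in> {w\<in>space srw_space. Evn D T (Suc n) p w}} \<partial>measure_pmf srw_step)"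
      by (rule emeasure_srw_Cons) measurable
    also have "\<dots> = (\<integral>\<^sup>+e. (if p \<in> D then emeasure srw_space {w\<in>space srw_space. Evn D T n (padd p e) w} else 0) \<partial>measure_pmf srw_step)"
      using nT by (intro nn_integral_cong) (simp add: Evn_Cons space_srw)
    also have "\<dots> \<le> G p"
    proof (cases "p \<in> D")
      case True
      have "(\<integral>\<^sup>+e. (if p \<in> D then emeasure srw_space {w\<in>space srw_space. Evn D T n (padd p e) w} else 0) \<partial>measure_pmf srw_step)
          = (\<Sum>e\<in>steps. emeasure srw_space {w\<in>space srw_space. Evn D T n (padd p e) w}) / 4"
        using True by (simp add: nn_int_step)
      also have "\<dots> \<le> (\<Sum>e\<in>steps. G (padd p e)) / 4"
        by (intro divide_right_mono_ennreal sum_mono Suc.IH)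
      also have "\<dots> \<le> G p" using D True nT by auto
      finally show ?thesis .
    qed simp
    finally show ?thesis .
  qed
qed

lemma Ev_bound:
  fixes G :: "pt \<Rightarrow> ennreal"
  assumes T: "\<forall>p\<in>T. 1 \<le> G p"
    and D: "\<forall>p\<in>D - T. (\<Sum>e\<in>steps. G (padd p e)) / 4 \<le> G p"
  shows "emeasure srw_space {w\<in>space srw_space. Ev D T p w} \<le> G p"
proof -
  have eq: "{w\<in>space srw_space. Ev D T p w} = (\<Union>n. {w\<in>space srw_space. Evn D T n p w})"
    unfolding Ev_def Evn_def by auto
  have inc: "incseq (\<lambda>n. {w\<in>space srw_space. Evn D T n p w})"
    unfolding incseq_def Evn_def by (auto intro: order_trans)
  have "emeasure srw_space {w\<in>space srw_space. Ev D T p w} = (SUP n. emeasure srw_space {w\<in>space srw_space. Evn D T n p w})"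
    unfolding eq by (rule SUP_emeasure_incseq[symmetric]) (use inc in auto)
  also have "\<dots> \<le> G p" by (intro SUP_least Evn_bound[OF T D])
  finally show ?thesis .
qed



lemma second_diff:
  fixes \<phi> \<phi>1 \<phi>2 :: "real \<Rightarrow> real"
  assumes d1: "\<And>t. -1 \<le> t \<Longrightarrow> t \<le> 1 \<Longrightarrow> (\<phi> has_real_derivative \<phi>1 t) (at t)"
    and d2: "\<And>t. -1 \<le> t \<Longrightarrow> t \<le> 1 \<Longrightarrow> (\<phi>1 has_real_derivative \<phi>2 t) (at t)"
  shows "\<exists>t1 t2. -1 \<le> t1 \<and> t1 \<le> 1 \<and> -1 \<le> t2 \<and> t2 \<le> 1 \<and> \<phi> 1 + \<phi> (-1) - 2 * \<phi> 0 = (\<phi>2 t1 + \<phi>2 t2) / 2"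
proof -
  define diff where "diff = (\<lambda>m::nat. if m = 0 then \<phi> else if m = 1 then \<phi>1 else \<phi>2)"
  have D: "\<forall>m t. m < 2 \<and> -1 \<le> t \<and> t \<le> 1 \<longrightarrow> DERIV (diff m) t :> diff (Suc m) t"
  proof (intro allI impI)
    fix m :: nat and t :: real assume "m < 2 \<and> -1 \<le> t \<and> t \<le> 1"
    then show "DERIV (diff m) t :> diff (Suc m) t"
      using d1 d2 by (cases m) (auto simp: diff_def less_2_cases_iff)
  qed
  have d0: "diff 0 = \<phi>" by (simp add: diff_def)
  obtain t1 where t1: "0 < t1" "t1 < 1" "\<phi> 1 = (\<Sum>m<2. diff m 0 / fact m * (1 - 0) ^ m) + diff 2 t1 / fact 2 * (1 - 0) ^ 2"
    using Taylor_up[OF _ d0 D, of 0] by auto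
  obtain t2 where t2: "-1 < t2" "t2 < 0" "\<phi> (-1) = (\<Sum>m<2. diff m 0 / fact m * (-1 - 0) ^ m) + diff 2 t2 / fact 2 * (-1 - 0) ^ 2"
    using Taylor_down[OF _ d0 D, of 0] by auto
  have "\<phi> 1 = \<phi> 0 + \<phi>1 0 + \<phi>2 t1 / 2" using t1(3) by (simp add: diff_def eval_nat_numeral)
  moreover have "\<phi> (-1) = \<phi> 0 - \<phi>1 0 + \<phi>2 t2 / 2" using t2(3) by (simp add: diff_def eval_nat_numeral)
  ultimately show ?thesis using t1 t2 by (intro exI[of _ t1] exI[of _ t2]) auto
qed

lemma Re_line_deriv:
  fixes F :: "complex \<Rightarrow> complex"
  assumes "(F has_field_derivative F') (at (a + of_real s * d))"
  shows "((\<lambda>s. Re (F (a + of_real s * d))) has_real_derivative Re (d * F')) (at s)"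
proof -
  have "((\<lambda>z. F (a + z * d)) has_field_derivative (d * F')) (at (of_real s))"
  proof -
    have g: "((\<lambda>z. a + z * d) has_field_derivative d) (at (of_real s))"
      by (auto intro!: derivative_eq_intros)
    have "((\<lambda>z. F ((\<lambda>z. a + z * d) z)) has_field_derivative F' * d) (at (of_real s))"
      by (rule DERIV_chain2[where f=F and g="\<lambda>z. a + z * d"]) (use assms g in auto)
    then show ?thesis by (simp add: mult.commute)
  qed
  then have "((\<lambda>s. F (a + of_real s * d)) has_vector_derivative (d * F')) (at s)"
    by (rule has_vector_derivative_real_field)
  then have "((\<lambda>s. Re (F (a + of_real s * d))) has_vector_derivative Re (d * F')) (at s)"
    by (rule bounded_linear.has_vector_derivative[OF bounded_linear_Re])
  then show ?thesis by (simp add: has_real_derivative_iff_has_vector_derivative)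
qed

lemma powr_deriv_c:
  fixes z :: complex and s :: complex
  assumes "0 < Re z"
  shows "((\<lambda>z. K * z powr s) has_field_derivative (K * (s * z powr (s - 1)))) (at z)"
proof -
  have "z \<notin> \<real>\<^sub>\<le>\<^sub>0" using assms by (auto simp: nonpos_Reals_def)
  then show ?thesis by (intro DERIV_cmult has_field_derivative_powr)
qed

definition hh :: "real \<Rightarrow> real \<Rightarrow> real \<Rightarrow> real" where
  "hh \<beta> x y = Re (Complex y x powr (- of_real \<beta>))"

lemma line_sd:
  fixes w0 d :: complex and \<beta> :: real
  assumes Rw: "Re w0 \<ge> 2" and dn: "norm d = 1"
  shows "\<exists>t1 t2. -1 \<le> t1 \<and> t1 \<le> 1 \<and> -1 \<le> t2 \<and> t2 \<le> 1 \<and>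
     Re ((w0 + d) powr (- of_real \<beta>)) + Re ((w0 - d) powr (- of_real \<beta>)) - 2 * Re (w0 powr (- of_real \<beta>))
     = (Re (d * d * (of_real (\<beta> * (\<beta> + 1))) * (w0 + of_real t1 * d) powr (- of_real \<beta> - 2))
      + Re (d * d * (of_real (\<beta> * (\<beta> + 1))) * (w0 + of_real t2 * d) powr (- of_real \<beta> - 2))) / 2"
proof -
  define s0 :: complex where "s0 = - of_real \<beta>"
  have Rz: "0 < Re (w0 + of_real t * d)" if "-1 \<le> t" "t \<le> 1" for t
  proof -
    have "\<bar>Re (of_real t * d)\<bar> \<le> norm (of_real t * d)" by (rule abs_Re_le_cmod)
    also have "\<dots> = \<bar>t\<bar>" using dn by (simp add: norm_mult)
    finally show ?thesis using that Rw by auto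
  qed
  have d1: "((\<lambda>t. Re ((w0 + of_real t * d) powr s0)) has_real_derivative Re (d * (s0 * (w0 + of_real t * d) powr (s0 - 1)))) (at t)"
    if "-1 \<le> t" "t \<le> 1" for t
  proof -
    have "((\<lambda>z. 1 * z powr s0) has_field_derivative 1 * (s0 * (w0 + of_real t * d) powr (s0 - 1))) (at (w0 + of_real t * d))"
      by (rule powr_deriv_c) (rule Rz[OF that])
    from Re_line_deriv[OF this] show ?thesis by simp
  qed
  have d2: "((\<lambda>t. Re (d * (s0 * (w0 + of_real t * d) powr (s0 - 1)))) has_real_derivative Re (d * (d * (s0 * ((s0 - 1) * (w0 + of_real t * d) powr (s0 - 1 - 1)))))) (at t)"
    if "-1 \<le> t" "t \<le> 1" for t
  proof -
    have "((\<lambda>z. (d * s0) * z powr (s0 - 1)) has_field_derivative (d * s0) * ((s0 - 1) * (w0 + of_real t * d) powr (s0 - 1 - 1))) (at (w0 + of_real t * d))"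
      by (rule powr_deriv_c) (rule Rz[OF that])
    from Re_line_deriv[OF this] show ?thesis by (simp add: mult.assoc)
  qed
  obtain t1 t2 where tt: "-1 \<le> t1" "t1 \<le> 1" "-1 \<le> t2" "t2 \<le> 1"
    "Re ((w0 + of_real 1 * d) powr s0) + Re ((w0 + of_real (-1) * d) powr s0) - 2 * Re ((w0 + of_real 0 * d) powr s0)
     = (Re (d * (d * (s0 * ((s0 - 1) * (w0 + of_real t1 * d) powr (s0 - 1 - 1))))) + Re (d * (d * (s0 * ((s0 - 1) * (w0 + of_real t2 * d) powr (s0 - 1 - 1)))))) / 2"
    using second_diff[OF d1 d2] by blast
  have e: "d * (d * (s0 * ((s0 - 1) * z))) = d * d * (of_real (\<beta> * (\<beta> + 1))) * z" for z
    by (simp add: s0_def algebra_simps)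
  have e2: "s0 - 1 - 1 = - of_real \<beta> - 2" by (simp add: s0_def)
  show ?thesis using tt unfolding e e2
    by (intro exI[of _ t1] exI[of _ t2]) (auto simp: s0_def)
qed

lemma P_lip:
  fixes w0 a b :: complex and \<beta> :: real
  assumes Rw: "Re w0 \<ge> 2" and b0: "0 < \<beta>"
    and a: "a \<in> cball w0 1" and b: "b \<in> cball w0 1"
  shows "norm (a powr (- of_real \<beta> - 2) - b powr (- of_real \<beta> - 2)) \<le> ((\<beta> + 2) * (Re w0 - 1) powr (- \<beta> - 3)) * norm (a - b)"
proof (rule field_differentiable_bound[OF convex_cball _ _ a b])
  have Rz: "Re w0 - 1 \<le> Re z" if "z \<in> cball w0 1" for z
  proof -
    have "\<bar>Re (w0 - z)\<bar> \<le> norm (w0 - z)" by (rule abs_Re_le_cmod)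
    also have "\<dots> \<le> 1" using that by (simp add: dist_norm)
    finally show ?thesis by simp
  qed
  fix z assume z: "z \<in> cball w0 1"
  have "0 < Re z" using Rz[OF z] Rw by linarith
  then have nz: "z \<notin> \<real>\<^sub>\<le>\<^sub>0" by (auto simp: nonpos_Reals_def)
  show "((\<lambda>z. z powr (- of_real \<beta> - 2)) has_field_derivative ((- of_real \<beta> - 2) * z powr (- of_real \<beta> - 2 - 1))) (at z within cball w0 1)"
    using has_field_derivative_powr[OF nz] by (rule has_field_derivative_at_within)
  have n1: "norm (- of_real \<beta> - 2 :: complex) = \<beta> + 2"
  proof -
    have "(- of_real \<beta> - 2 :: complex) = of_real (- (\<beta> + 2))" by (simp add: algebra_simps)
    then show ?thesis using b0 by (simp only: norm_of_real)
  qed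
  have "(- of_real \<beta> - 2 - 1 :: complex) = of_real (- \<beta> - 3)" by (simp add: algebra_simps)
  then have n2: "norm (z powr (- of_real \<beta> - 2 - 1)) = norm z powr (- \<beta> - 3)"
    by (metis norm_powr_real_powr' Reals_of_real Re_complex_of_real)
  have "Re w0 - 1 \<le> norm z" using Rz[OF z] complex_Re_le_cmod[of z] by linarith
  then have nzb: "norm z powr (- \<beta> - 3) \<le> (Re w0 - 1) powr (- \<beta> - 3)"
    using b0 Rw by (intro powr_mono2') auto
  then show "norm ((- of_real \<beta> - 2) * z powr (- of_real \<beta> - 2 - 1)) \<le> (\<beta> + 2) * (Re w0 - 1) powr (- \<beta> - 3)"
  proof -
    have "norm ((- of_real \<beta> - 2) * z powr (- of_real \<beta> - 2 - 1)) = (\<beta> + 2) * norm z powr (- \<beta> - 3)"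
      by (simp only: norm_mult n1 n2)
    also have "\<dots> \<le> (\<beta> + 2) * (Re w0 - 1) powr (- \<beta> - 3)"
      using nzb b0 by (intro mult_left_mono) auto
    finally show ?thesis .
  qed
qed

lemma line_pt_cball:
  fixes w0 d :: complex
  assumes "norm d = 1" "-1 \<le> t" "t \<le> 1"
  shows "w0 + of_real t * d \<in> cball w0 1"
  using assms by (simp add: dist_norm norm_mult)

lemma harm_bound:
  fixes x y \<beta> :: real
  assumes y: "y \<ge> 3" and b0: "0 < \<beta>"
  shows "\<bar>(hh \<beta> (x+1) y + hh \<beta> (x-1) y - 2 * hh \<beta> x y) + (hh \<beta> x (y+1) + hh \<beta> x (y-1) - 2 * hh \<beta> x y)\<bar>
         \<le> 2 * (\<beta> * (\<beta> + 1)) * ((\<beta> + 2) * (y - 1) powr (- \<beta> - 3))"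
proof -
  define w0 where "w0 = Complex y x"
  define k where "k = \<beta> * (\<beta> + 1)"
  define L where "L = (\<beta> + 2) * (y - 1) powr (- \<beta> - 3)"
  define P where "P = (\<lambda>z::complex. z powr (- of_real \<beta> - 2))"
  have Rw: "Re w0 \<ge> 2" using y by (simp add: w0_def)
  have k0: "k \<ge> 0" using b0 by (simp add: k_def)
  obtain t1 t2 where t: "-1 \<le> t1" "t1 \<le> 1" "-1 \<le> t2" "t2 \<le> 1" and
    ex: "Re ((w0 + \<i>) powr (- of_real \<beta>)) + Re ((w0 - \<i>) powr (- of_real \<beta>)) - 2 * Re (w0 powr (- of_real \<beta>))
     = (Re (\<i> * \<i> * (of_real k) * P (w0 + of_real t1 * \<i>))
      + Re (\<i> * \<i> * (of_real k) * P (w0 + of_real t2 * \<i>))) / 2"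
    using line_sd[OF Rw, of \<i> \<beta>] unfolding k_def P_def by auto
  obtain s1 s2 where s: "-1 \<le> s1" "s1 \<le> 1" "-1 \<le> s2" "s2 \<le> 1" and
    ey: "Re ((w0 + 1) powr (- of_real \<beta>)) + Re ((w0 - 1) powr (- of_real \<beta>)) - 2 * Re (w0 powr (- of_real \<beta>))
     = (Re (1 * 1 * (of_real k) * P (w0 + of_real s1 * 1))
      + Re (1 * 1 * (of_real k) * P (w0 + of_real s2 * 1))) / 2"
    using line_sd[OF Rw, of 1 \<beta>] unfolding k_def P_def by auto
  define a1 where "a1 = w0 + of_real t1 * \<i>"
  define a2 where "a2 = w0 + of_real t2 * \<i>"
  define b1 where "b1 = w0 + of_real s1 * 1"
  define b2 where "b2 = w0 + of_real s2 * 1"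
  have inb: "a1 \<in> cball w0 1" "a2 \<in> cball w0 1" "b1 \<in> cball w0 1" "b2 \<in> cball w0 1"
    unfolding a1_def a2_def b1_def b2_def using t s by (intro line_pt_cball; simp)+
  have d2: "norm (b - a) \<le> 2" if "a \<in> cball w0 1" "b \<in> cball w0 1" for a b
  proof -
    have "norm (b - a) \<le> norm (b - w0) + norm (w0 - a)" using norm_triangle_ineq[of "b - w0" "w0 - a"] by simp
    also have "\<dots> \<le> 2" using that by (simp add: dist_norm norm_minus_commute)
    finally show ?thesis .
  qed
  have lip: "\<bar>Re (P b) - Re (P a)\<bar> \<le> 2 * L" if "a \<in> cball w0 1" "b \<in> cball w0 1" for a b
  proof -
    have "\<bar>Re (P b) - Re (P a)\<bar> = \<bar>Re (P b - P a)\<bar>" by simp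
    also have "\<dots> \<le> norm (P b - P a)" by (rule abs_Re_le_cmod)
    also have "\<dots> \<le> L * norm (b - a)"
      using P_lip[OF Rw b0 that(2) that(1)] unfolding P_def L_def by (simp add: w0_def)
    also have "\<dots> \<le> L * 2" using d2[OF that] b0 by (intro mult_left_mono) (auto simp: L_def)
    finally show ?thesis by simp
  qed
  have hx1: "hh \<beta> (x+1) y = Re ((w0 + \<i>) powr (- of_real \<beta>))"
    and hx2: "hh \<beta> (x-1) y = Re ((w0 - \<i>) powr (- of_real \<beta>))"
    and hy1: "hh \<beta> x (y+1) = Re ((w0 + 1) powr (- of_real \<beta>))"
    and hy2: "hh \<beta> x (y-1) = Re ((w0 - 1) powr (- of_real \<beta>))"
    and h0: "hh \<beta> x y = Re (w0 powr (- of_real \<beta>))"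
  proof -
    have "Complex y (x+1) = Complex y x + \<i>" "Complex y (x-1) = Complex y x - \<i>"
      "Complex (y+1) x = Complex y x + 1" "Complex (y-1) x = Complex y x - 1"
      by (simp_all add: complex_eq_iff)
    then show "hh \<beta> (x+1) y = Re ((w0 + \<i>) powr (- of_real \<beta>))"
      "hh \<beta> (x-1) y = Re ((w0 - \<i>) powr (- of_real \<beta>))"
      "hh \<beta> x (y+1) = Re ((w0 + 1) powr (- of_real \<beta>))"
      "hh \<beta> x (y-1) = Re ((w0 - 1) powr (- of_real \<beta>))"
      "hh \<beta> x y = Re (w0 powr (- of_real \<beta>))"
      unfolding hh_def w0_def by simp_all
  qed
  have "(hh \<beta> (x+1) y + hh \<beta> (x-1) y - 2 * hh \<beta> x y) + (hh \<beta> x (y+1) + hh \<beta> x (y-1) - 2 * hh \<beta> x y)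
     = k * ((Re (P b1) - Re (P a1)) + (Re (P b2) - Re (P a2))) / 2"
    unfolding hx1 hx2 hy1 hy2 h0 ex ey a1_def a2_def b1_def b2_def
    by (simp add: field_simps)
  also have "\<bar>\<dots>\<bar> \<le> k * (2 * L + 2 * L) / 2"
  proof -
    have "\<bar>(Re (P b1) - Re (P a1)) + (Re (P b2) - Re (P a2))\<bar> \<le> 2 * L + 2 * L"
      using lip[OF inb(1) inb(3)] lip[OF inb(2) inb(4)] by linarith
    then have "k * \<bar>(Re (P b1) - Re (P a1)) + (Re (P b2) - Re (P a2))\<bar> \<le> k * (2 * L + 2 * L)"
      using k0 by (rule mult_left_mono)
    then show ?thesis using k0 by (simp add: abs_mult mult_ac)
  qed
  finally show ?thesis by (simp add: k_def L_def)
qed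

lemma corr_sd:
  fixes y \<beta> :: real
  assumes y: "y \<ge> 2" and b0: "0 < \<beta>"
  shows "(y+1) powr (-\<beta>) + (y-1) powr (-\<beta>) - 2 * y powr (-\<beta>) \<ge> \<beta> * (\<beta> + 1) * (y + 1) powr (- \<beta> - 2)"
proof -
  have d1: "((\<lambda>t. (y + t) powr (-\<beta>)) has_real_derivative (-\<beta>) * (y + t) powr (-\<beta> - 1)) (at t)"
    if "-1 \<le> t" "t \<le> 1" for t
    using that y by (auto intro!: derivative_eq_intros)
  have d2: "((\<lambda>t. (-\<beta>) * (y + t) powr (-\<beta> - 1)) has_real_derivative \<beta> * (\<beta> + 1) * (y + t) powr (-\<beta> - 2)) (at t)"
    if "-1 \<le> t" "t \<le> 1" for t
    using that y by (auto intro!: derivative_eq_intros simp: algebra_simps)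
  obtain t1 t2 where t: "-1 \<le> t1" "t1 \<le> 1" "-1 \<le> t2" "t2 \<le> 1"
    and e: "(y + 1) powr (-\<beta>) + (y + -1) powr (-\<beta>) - 2 * (y + 0) powr (-\<beta>)
      = (\<beta> * (\<beta> + 1) * (y + t1) powr (-\<beta> - 2) + \<beta> * (\<beta> + 1) * (y + t2) powr (-\<beta> - 2)) / 2"
    using second_diff[OF d1 d2] by blast
  have k: "0 \<le> \<beta> * (\<beta> + 1)" using b0 by simp
  have m: "(y + 1) powr (- \<beta> - 2) \<le> (y + ti) powr (- \<beta> - 2)" if "-1 \<le> ti" "ti \<le> 1" for ti
    using that y b0 by (intro powr_mono2') auto
  have "\<beta> * (\<beta> + 1) * (y + 1) powr (- \<beta> - 2) \<le> \<beta> * (\<beta> + 1) * (y + t1) powr (-\<beta> - 2)"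
    using m[OF t(1,2)] k by (rule mult_left_mono)
  moreover have "\<beta> * (\<beta> + 1) * (y + 1) powr (- \<beta> - 2) \<le> \<beta> * (\<beta> + 1) * (y + t2) powr (-\<beta> - 2)"
    using m[OF t(3,4)] k by (rule mult_left_mono)
  ultimately show ?thesis using e by simp
qed

definition uu :: "real \<Rightarrow> real \<Rightarrow> real \<Rightarrow> real \<Rightarrow> real" where
  "uu \<beta> \<epsilon> x y = hh \<beta> x y - \<epsilon> * y powr (-\<beta>)"

lemma superharm:
  fixes x y \<beta> \<epsilon> :: real
  assumes b0: "0 < \<beta>" and b2: "\<beta> \<le> 2" and e0: "0 < \<epsilon>" and y3: "y \<ge> 3" and ye: "\<epsilon> * (y - 1) \<ge> 128"
  shows "uu \<beta> \<epsilon> (x+1) y + uu \<beta> \<epsilon> (x-1) y + uu \<beta> \<epsilon> x (y+1) + uu \<beta> \<epsilon> x (y-1) \<le> 4 * uu \<beta> \<epsilon> x y"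
proof -
  define k where "k = \<beta> * (\<beta> + 1)"
  define A where "A = (y - 1) powr (- \<beta> - 2)"
  have k0: "k > 0" using b0 by (simp add: k_def)
  have A0: "A > 0" using y3 by (simp add: A_def)
  have H: "(hh \<beta> (x+1) y + hh \<beta> (x-1) y - 2 * hh \<beta> x y) + (hh \<beta> x (y+1) + hh \<beta> x (y-1) - 2 * hh \<beta> x y)
         \<le> 2 * k * ((\<beta> + 2) * (y - 1) powr (- \<beta> - 3))"
    using harm_bound[OF y3 b0, of x] unfolding k_def by linarith
  have C: "(y+1) powr (-\<beta>) + (y-1) powr (-\<beta>) - 2 * y powr (-\<beta>) \<ge> k * (y + 1) powr (- \<beta> - 2)"
    using corr_sd[of y \<beta>] y3 b0 by (simp add: k_def)
  have p3: "(y - 1) powr (- \<beta> - 3) = A / (y - 1)"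
  proof -
    have "(y - 1) powr (- \<beta> - 3) = (y - 1) powr ((- \<beta> - 2) + (-1))" by (simp add: algebra_simps)
    also have "\<dots> = A * (y - 1) powr (-1)" unfolding A_def by (rule powr_add)
    also have "\<dots> = A / (y - 1)" using y3 by (simp add: powr_neg_one divide_inverse)
    finally show ?thesis .
  qed
  have p2: "(y + 1) powr (- \<beta> - 2) \<ge> A / 16"
  proof -
    have "(2 * (y - 1)) powr (- \<beta> - 2) \<le> (y + 1) powr (- \<beta> - 2)"
      using y3 b0 by (intro powr_mono2') auto
    moreover have "(2 * (y - 1)) powr (- \<beta> - 2) = 2 powr (- \<beta> - 2) * A"
      unfolding A_def using y3 by (subst powr_mult) auto
    moreover have "2 powr (- \<beta> - 2) \<ge> 2 powr (-4::real)"
      using b2 by (intro powr_mono) auto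
    moreover have "(2::real) powr (-4::real) = 1/16"
      by (simp add: powr_minus powr_realpow)
    ultimately have "1/16 * A \<le> 2 powr (- \<beta> - 2) * A" "2 powr (- \<beta> - 2) * A \<le> (y + 1) powr (- \<beta> - 2)"
      using A0 by (auto intro!: mult_right_mono)
    then show ?thesis by simp
  qed
  have key: "2 * ((\<beta> + 2) * (A / (y - 1))) \<le> \<epsilon> * (A / 16)"
  proof -
    have "2 * ((\<beta> + 2) * (A / (y - 1))) \<le> 2 * (4 * (A / (y - 1)))"
      using b2 A0 y3 by (intro mult_left_mono mult_right_mono) auto
    also have "\<dots> = A * (8 / (y - 1))" by simp
    also have "\<dots> \<le> A * (\<epsilon> / 16)"
    proof (rule mult_left_mono)
      show "8 / (y - 1) \<le> \<epsilon> / 16" using ye y3 by (simp add: field_simps)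
    qed (use A0 in simp)
    finally show ?thesis by (simp add: mult.commute)
  qed
  have "2 * k * ((\<beta> + 2) * (y - 1) powr (- \<beta> - 3)) \<le> \<epsilon> * (k * (y + 1) powr (- \<beta> - 2))"
  proof -
    have "2 * k * ((\<beta> + 2) * (y - 1) powr (- \<beta> - 3)) = k * (2 * ((\<beta> + 2) * (A / (y - 1))))"
      by (simp add: p3)
    also have "\<dots> \<le> k * (\<epsilon> * (A / 16))" using key k0 by (intro mult_left_mono) auto
    also have "\<dots> \<le> k * (\<epsilon> * (y + 1) powr (- \<beta> - 2))" using p2 k0 e0 by (intro mult_left_mono) auto
    finally show ?thesis by (simp add: mult_ac)
  qed
  also have "\<dots> \<le> \<epsilon> * ((y+1) powr (-\<beta>) + (y-1) powr (-\<beta>) - 2 * y powr (-\<beta>))"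
    using C e0 by (intro mult_left_mono) auto
  finally show ?thesis using H unfolding uu_def by (simp add: algebra_simps)
qed

lemma hh_polar:
  assumes y: "y > 0"
  shows "hh \<beta> x y = norm (Complex y x) powr (-\<beta>) * cos (\<beta> * arctan (x / y))"
proof -
  define z where "z = Complex y x"
  have z0: "z \<noteq> 0" using y by (auto simp: z_def complex_eq_iff)
  have R: "Re z > 0" using y by (simp add: z_def)
  have Im: "Im (Ln z) = arctan (x / y)"
    using Arg_eq_Im_Ln[OF z0] arg_conv_arctan[OF R] by (simp add: z_def)
  have Re: "Re (Ln z) = ln (norm z)" using z0 by simp
  have "hh \<beta> x y = Re (exp (- of_real \<beta> * Ln z))"
    unfolding hh_def z_def[symmetric] using z0 by (simp add: powr_def)
  also have "\<dots> = exp (- \<beta> * ln (norm z)) * cos (- \<beta> * arctan (x / y))"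
    by (simp add: Re_exp Re Im)
  also have "\<dots> = norm z powr (-\<beta>) * cos (\<beta> * arctan (x / y))"
    using z0 by (simp add: powr_def)
  finally show ?thesis by (simp add: z_def)
qed

lemma hh_upper:
  assumes y: "y > 0" and b0: "\<beta> > 0"
  shows "hh \<beta> x y \<le> y powr (-\<beta>)"
proof -
  have ny: "y \<le> norm (Complex y x)" using complex_Re_le_cmod[of "Complex y x"] by simp
  have "hh \<beta> x y \<le> norm (Complex y x) powr (-\<beta>) * 1"
    unfolding hh_polar[OF y] by (intro mult_left_mono) auto
  also have "\<dots> \<le> y powr (-\<beta>)" using ny y b0 by (simp add: powr_mono2')
  finally show ?thesis .
qed

lemma hh_lower:
  fixes c :: real
  assumes y: "y > 0" and b0: "\<beta> > 0" and b2: "\<beta> \<le> 2" and c: "c > 0"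
    and xb: "\<bar>x\<bar> \<le> 2 * y / c" and ang: "\<beta> * arctan (2 / c) \<le> pi / 2"
  shows "hh \<beta> x y \<ge> cos (\<beta> * arctan (2 / c)) * (c / (c + 2))^2 * y powr (-\<beta>)"
proof -
  define \<kappa> where "\<kappa> = cos (\<beta> * arctan (2 / c))"
  have at0: "arctan (2 / c) \<ge> 0" using c by (simp add: zero_le_arctan_iff)
  have k0: "\<kappa> \<ge> 0" unfolding \<kappa>_def
  proof -
    have "0 \<le> \<beta> * arctan (2 / c)" using b0 at0 by simp
    then show "0 \<le> cos (\<beta> * arctan (2 / c))" using ang pi_gt_zero by (intro cos_ge_zero) linarith+
  qed
  have cosb: "cos (\<beta> * arctan (x / y)) \<ge> \<kappa>"
  proof -
    have "cos (\<beta> * arctan (x / y)) = cos (\<bar>\<beta> * arctan (x / y)\<bar>)"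
      by (cases "\<beta> * arctan (x / y) \<ge> 0") (simp_all add: abs_of_nonneg abs_of_neg)
    also have "\<bar>\<beta> * arctan (x / y)\<bar> = \<beta> * arctan (\<bar>x\<bar> / y)"
      using b0 y by (simp add: abs_mult abs_arctan)
    also have "cos (\<beta> * arctan (\<bar>x\<bar> / y)) \<ge> \<kappa>" unfolding \<kappa>_def
    proof (rule cos_monotone_0_pi_le)
      show "0 \<le> \<beta> * arctan (\<bar>x\<bar> / y)" using b0 y by (simp add: zero_le_arctan_iff)
      have "\<bar>x\<bar> / y \<le> 2 / c" using xb y c by (simp add: field_simps)
      then have "arctan (\<bar>x\<bar> / y) \<le> arctan (2 / c)" by (rule arctan_monotone')
      then show "\<beta> * arctan (\<bar>x\<bar> / y) \<le> \<beta> * arctan (2 / c)" using b0 by simp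
      show "\<beta> * arctan (2 / c) \<le> pi" using ang pi_gt_zero by linarith
    qed
    finally show ?thesis .
  qed
  have nz: "norm (Complex y x) \<le> y * ((c + 2) / c)"
  proof -
    have "norm (Complex y x) \<le> \<bar>y\<bar> + \<bar>x\<bar>" using cmod_le[of "Complex y x"] by simp
    also have "\<dots> \<le> y + 2 * y / c" using y xb by simp
    also have "\<dots> = y * ((c + 2) / c)" using c by (simp add: field_simps)
    finally show ?thesis .
  qed
  have nzp: "norm (Complex y x) > 0" using y by (auto simp: complex_eq_iff)
  have "(y * ((c + 2) / c)) powr (-\<beta>) \<le> norm (Complex y x) powr (-\<beta>)"
    using nz nzp b0 by (intro powr_mono2') auto
  moreover have "(y * ((c + 2) / c)) powr (-\<beta>) = y powr (-\<beta>) * ((c + 2) / c) powr (-\<beta>)"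
    using y c by (subst powr_mult) auto
  moreover have "((c + 2) / c) powr (-\<beta>) \<ge> ((c + 2) / c) powr (-2::real)"
    using b2 c by (intro powr_mono) (auto simp: field_simps)
  moreover have "((c + 2) / c) powr (-2::real) = (c / (c + 2))^2"
    using c by (simp add: powr_minus powr_realpow power_divide)
  ultimately have nlow: "y powr (-\<beta>) * (c / (c + 2))^2 \<le> norm (Complex y x) powr (-\<beta>)"
  proof -
    assume a1: "(y * ((c + 2) / c)) powr (-\<beta>) \<le> norm (Complex y x) powr (-\<beta>)"
      and a2: "(y * ((c + 2) / c)) powr (-\<beta>) = y powr (-\<beta>) * ((c + 2) / c) powr (-\<beta>)"
      and a3: "((c + 2) / c) powr (-\<beta>) \<ge> ((c + 2) / c) powr (-2::real)"
      and a4: "((c + 2) / c) powr (-2::real) = (c / (c + 2))^2"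
    have "y powr (-\<beta>) * (c / (c + 2))^2 \<le> y powr (-\<beta>) * ((c + 2) / c) powr (-\<beta>)"
      using a3 a4 by (intro mult_left_mono) auto
    then show ?thesis using a1 a2 by linarith
  qed
  have "\<kappa> * (c / (c + 2))^2 * y powr (-\<beta>) = \<kappa> * (y powr (-\<beta>) * (c / (c + 2))^2)" by simp
  also have "\<dots> \<le> \<kappa> * norm (Complex y x) powr (-\<beta>)" using nlow k0 by (rule mult_left_mono)
  also have "\<dots> \<le> cos (\<beta> * arctan (x / y)) * norm (Complex y x) powr (-\<beta>)"
    using cosb by (rule mult_right_mono) simp
  also have "\<dots> = hh \<beta> x y" unfolding hh_polar[OF y] by simp
  finally show ?thesis unfolding \<kappa>_def .
qed



lemma col_in_B:
  fixes B :: "pt set" and x1 y :: int and t :: real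
  assumes h: "col_height B x1 \<ge> ereal t" and y1: "1 \<le> y" and yt: "real_of_int y \<le> t"
  shows "(x1, y) \<in> B"
proof (rule ccontr)
  assume nB: "(x1, y) \<notin> B"
  have "col_height B x1 \<le> ereal (real_of_int (y - 1))"
    unfolding col_height_def
  proof (rule Sup_least, clarify)
    fix x2 :: int assume x2: "0 \<le> x2" "\<forall>y'\<in>{1..x2}. (x1, y') \<in> B"
    have "x2 < y"
    proof (rule ccontr)
      assume "\<not> x2 < y" then have "y \<in> {1..x2}" using y1 by auto
      then show False using x2 nB by auto
    qed
    then show "ereal (real_of_int x2) \<le> ereal (real_of_int (y - 1))" by simp
  qed
  then have "ereal t \<le> ereal (real_of_int (y - 1))" using h by (rule order_trans[rotated])
  then show False using yt by simp
qed

lemma cone: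
  fixes B :: "pt set" and c M :: real and H :: int
  assumes c: "0 < c"
    and col: "\<forall>x1::int. \<bar>real_of_int x1\<bar> \<ge> M \<longrightarrow> col_height B x1 \<ge> ereal \<bar>c * real_of_int x1\<bar>"
    and HM: "c * \<bar>M\<bar> \<le> real_of_int H" and H1: "1 \<le> H"
    and p: "p \<notin> B" "snd p \<ge> H"
  shows "c * \<bar>real_of_int (fst p)\<bar> < real_of_int (snd p)"
proof (cases "\<bar>real_of_int (fst p)\<bar> \<ge> M")
  case True
  show ?thesis
  proof (rule ccontr)
    assume "\<not> ?thesis"
    then have le: "real_of_int (snd p) \<le> \<bar>c * real_of_int (fst p)\<bar>" using c by (simp add: abs_mult)
    have "(fst p, snd p) \<in> B"
      by (rule col_in_B[OF col[rule_format, OF True] _ le]) (use p H1 in auto)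
    then show False using p by simp
  qed
next
  case False
  then have "c * \<bar>real_of_int (fst p)\<bar> < c * \<bar>M\<bar>" using c by (intro mult_strict_left_mono) auto
  also have "\<dots> \<le> real_of_int (snd p)" using HM p by linarith
  finally show ?thesis .
qed

lemma hit_sub_Ev:
  fixes B :: "pt set" and H :: int
  assumes xB: "x \<in> B" and xH: "snd x < H" and zH: "snd z \<ge> H"
  shows "{w \<in> space srw_space. \<exists>n. walk z w n \<in> B \<union> hline 0 \<and> (\<forall>m<n. walk z w m \<notin> B \<union> hline 0) \<and> walk z w n = x}
    \<subseteq> {w \<in> space srw_space. Ev {p. snd p \<ge> H \<and> p \<notin> B} {p. snd p < H} z w}"
proof (rule subsetI)
  fix w assume "w \<in> {w \<in> space srw_space. \<exists>n. walk z w n \<in> B \<union> hline 0 \<and> (\<forall>m<n. walk z w m \<notin> B \<union> hline 0) \<and> walk z w n = x}"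
  then obtain n where w: "w \<in> space srw_space" and n: "\<forall>m<n. walk z w m \<notin> B \<union> hline 0" "walk z w n = x"
    by blast
  define k where "k = (LEAST k. snd (walk z w k) < H)"
  have ex: "snd (walk z w n) < H" using n xH by simp
  have k1: "snd (walk z w k) < H" unfolding k_def using ex by (rule LeastI)
  have kn: "k \<le> n" unfolding k_def using ex by (rule Least_le)
  have "\<forall>m<k. walk z w m \<in> {p. snd p \<ge> H \<and> p \<notin> B}"
  proof (intro allI impI)
    fix m assume m: "m < k"
    have "\<not> snd (walk z w m) < H" using not_less_Least[OF m[unfolded k_def]] .
    moreover have "walk z w m \<notin> B" using n(1) m kn by auto
    ultimately show "walk z w m \<in> {p. snd p \<ge> H \<and> p \<notin> B}" by auto
  qed
  then have "Ev {p. snd p \<ge> H \<and> p \<notin> B} {p. snd p < H} z w"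
    unfolding Ev_def using k1 by blast
  then show "w \<in> {w \<in> space srw_space. Ev {p. snd p \<ge> H \<and> p \<notin> B} {p. snd p < H} z w}" using w by blast
qed

theorem theorem1:
  fixes B :: "pt set" and c M :: real and x :: pt
  assumes "B \<subseteq> upper_half"
    and "0 < c"
    and "\<forall>x1::int. \<bar>real_of_int x1\<bar> \<ge> M \<longrightarrow> col_height B x1 \<ge> ereal \<bar>c * real_of_int x1\<bar>"
    and "x \<in> B"
  shows "(\<lambda>N. harm_N B N x) \<longlonglongrightarrow> 0"
proof -
  note c = assms(2) and col = assms(3) and xB = assms(4)
  define \<theta> where "\<theta> = arctan (2 / c)"
  have th0: "0 < \<theta>" using c by (simp add: \<theta>_def)
  have thpi: "\<theta> < pi / 2" unfolding \<theta>_def by (rule arctan_ubound)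
  define \<beta> where "\<beta> = min (3/2) ((1 + pi / (2 * \<theta>)) / 2)"
  have b1: "1 < \<beta>"
  proof -
    have "1 < pi / (2 * \<theta>)" using th0 thpi by (simp add: field_simps)
    then show ?thesis by (simp add: \<beta>_def)
  qed
  have b2: "\<beta> \<le> 2" by (simp add: \<beta>_def)
  have bth: "\<beta> * \<theta> < pi / 2"
  proof -
    have "\<beta> \<le> (1 + pi / (2 * \<theta>)) / 2" unfolding \<beta>_def by (rule min.cobounded2)
    then have "\<beta> * \<theta> \<le> ((1 + pi / (2 * \<theta>)) / 2) * \<theta>" using th0 by (intro mult_right_mono) simp_all
    also have "\<dots> = (\<theta> + pi / 2) / 2" using th0 by (simp add: field_simps)
    also have "\<dots> < pi / 2" using thpi by simp
    finally show ?thesis .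
  qed
  define \<kappa> where "\<kappa> = cos (\<beta> * \<theta>)"
  have k0: "0 < \<kappa>"
  proof -
    have "0 < \<beta> * \<theta>" using th0 b1 by simp
    then show ?thesis unfolding \<kappa>_def using bth pi_gt_zero by (intro cos_gt_zero_pi) linarith+
  qed
  define \<epsilon> where "\<epsilon> = \<kappa> * (c / (c + 2))^2 / 2"
  have e0: "0 < \<epsilon>" using k0 c by (simp add: \<epsilon>_def)
  have ulow: "uu \<beta> \<epsilon> xr yr \<ge> \<epsilon> * yr powr (-\<beta>)" if "yr > 0" "\<bar>xr\<bar> \<le> 2 * yr / c" for xr yr
  proof -
    have "hh \<beta> xr yr \<ge> cos (\<beta> * arctan (2 / c)) * (c / (c + 2))^2 * yr powr (-\<beta>)"
      using that b1 b2 c bth by (intro hh_lower) (auto simp: \<theta>_def)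
    then have "hh \<beta> xr yr \<ge> 2 * \<epsilon> * yr powr (-\<beta>)" by (simp add: \<epsilon>_def \<kappa>_def \<theta>_def)
    then show ?thesis by (simp add: uu_def)
  qed
  have uup: "uu \<beta> \<epsilon> xr yr \<le> yr powr (-\<beta>)" if "yr > 0" for xr yr
  proof -
    have "hh \<beta> xr yr \<le> yr powr (-\<beta>)" using that b1 by (intro hh_upper) auto
    moreover have "0 \<le> \<epsilon> * yr powr (-\<beta>)" using e0 by simp
    ultimately show ?thesis by (simp add: uu_def)
  qed
  define H :: int where "H = \<lceil>c * \<bar>M\<bar> + c + 3 + 128 / \<epsilon>\<rceil> + \<bar>snd x\<bar> + 1"
  have HM: "c * \<bar>M\<bar> \<le> real_of_int H" and H3: "3 \<le> H" and Hc: "c \<le> real_of_int H"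
    and He: "128 \<le> \<epsilon> * (real_of_int H - 1)" and Hx: "snd x < H"
  proof -
    have a: "c * \<bar>M\<bar> + c + 3 + 128 / \<epsilon> \<le> real_of_int \<lceil>c * \<bar>M\<bar> + c + 3 + 128 / \<epsilon>\<rceil>" by (rule le_of_int_ceiling)
    have b: "0 \<le> c * \<bar>M\<bar>" using c by simp
    have d: "0 \<le> 128 / \<epsilon>" using e0 by simp
    have r: "real_of_int H = real_of_int \<lceil>c * \<bar>M\<bar> + c + 3 + 128 / \<epsilon>\<rceil> + real_of_int \<bar>snd x\<bar> + 1"
      by (simp add: H_def)
    have s: "0 \<le> real_of_int \<bar>snd x\<bar>" by simp
    show "c * \<bar>M\<bar> \<le> real_of_int H" using a b c d r s by linarith
    show "c \<le> real_of_int H" using a b c d r s by linarith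
    have "3 \<le> real_of_int H" using a b c d r s by linarith
    then show "3 \<le> H" by linarith
    have "128 / \<epsilon> \<le> real_of_int H - 1" using a b c d r s by linarith
    then show "128 \<le> \<epsilon> * (real_of_int H - 1)" using e0 by (simp add: field_simps)
    have "0 \<le> real_of_int \<lceil>c * \<bar>M\<bar> + c + 3 + 128 / \<epsilon>\<rceil>" using a b c d by linarith
    then have "\<lceil>c * \<bar>M\<bar> + c + 3 + 128 / \<epsilon>\<rceil> \<ge> 0" by (simp only: of_int_0_le_iff)
    then show "snd x < H" unfolding H_def by linarith
  qed
  define D where "D = {p::pt. snd p \<ge> H \<and> p \<notin> B}"
  define T where "T = {p::pt. snd p < H}"
  define K where "K = real_of_int H powr \<beta> / \<epsilon>"
  define U where "U = (\<lambda>p::pt. uu \<beta> \<epsilon> (real_of_int (fst p)) (real_of_int (snd p)))"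
  define G where "G = (\<lambda>p::pt. if snd p < H then 1 else if p \<notin> B then ennreal (K * U p) else (0::ennreal))"
  have K0: "0 < K" using e0 H3 by (simp add: K_def)
  have coneD: "c * \<bar>real_of_int (fst p)\<bar> < real_of_int (snd p)" if "p \<in> D" for p
    using cone[OF c col HM _ _ _] that H3 by (auto simp: D_def)
  have Ulow: "U q \<ge> \<epsilon> * real_of_int (snd q) powr (-\<beta>)"
    if "snd q \<ge> 1" "c * \<bar>real_of_int (fst q)\<bar> \<le> 2 * real_of_int (snd q)" for q
    unfolding U_def using that c by (intro ulow) (auto simp: field_simps)
  have GT: "\<forall>p\<in>T. 1 \<le> G p" by (simp add: T_def G_def)
  have GD: "\<forall>p\<in>D - T. (\<Sum>e\<in>steps. G (padd p e)) / 4 \<le> G p"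
  proof
    fix p assume p: "p \<in> D - T"
    obtain a b where ab: "p = (a, b)" by (cases p)
    have bH: "b \<ge> H" and pB: "(a, b) \<notin> B" using p ab by (auto simp: D_def)
    have cab: "c * \<bar>real_of_int a\<bar> < real_of_int b" using coneD[of p] p ab by auto
    have sum4: "(\<Sum>e\<in>steps. G (padd p e)) = G (a+1, b) + G (a-1, b) + G (a, b+1) + G (a, b-1)"
      by (simp add: steps_def padd_def ab add_ac)
    have gq: "G q \<le> ennreal (K * U q) \<and> 0 \<le> K * U q"
      if q: "q \<in> {(a+1, b), (a-1, b), (a, b+1), (a, b-1)}" for q
    proof -
      have sq: "snd q \<ge> b - 1" using q by auto
      have sq1: "snd q \<ge> 1" using sq bH H3 by linarith
      have cq: "c * \<bar>real_of_int (fst q)\<bar> \<le> 2 * real_of_int (snd q)"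
      proof -
        have "c * \<bar>real_of_int (fst q)\<bar> \<le> c * \<bar>real_of_int a\<bar> + c"
        proof -
          have "\<bar>real_of_int (fst q)\<bar> \<le> \<bar>real_of_int a\<bar> + 1" using q by auto
          then have "c * \<bar>real_of_int (fst q)\<bar> \<le> c * (\<bar>real_of_int a\<bar> + 1)" using c by (intro mult_left_mono) auto
          then show ?thesis by (simp add: algebra_simps)
        qed
        moreover have "real_of_int b \<le> real_of_int (snd q) + 1" using sq by linarith
        moreover have "c \<le> real_of_int b" using Hc bH by linarith
        moreover have "real_of_int H \<ge> 3" using H3 by linarith
        moreover have "c \<le> real_of_int (snd q) + 1" using q Hc bH by auto
        ultimately show ?thesis using cab q bH by auto
      qed
      have Ul: "U q \<ge> \<epsilon> * real_of_int (snd q) powr (-\<beta>)" by (rule Ulow[OF sq1 cq])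
      have U0: "0 \<le> U q" using Ul e0 by (smt (verit) mult_nonneg_nonneg powr_ge_zero)
      have "G q \<le> ennreal (K * U q)"
      proof (cases "snd q < H")
        case True
        then have sqH: "snd q = H - 1" using sq bH by linarith
        have "1 \<le> K * U q"
        proof -
          have "real_of_int H powr (-\<beta>) \<le> real_of_int (snd q) powr (-\<beta>)"
            using sqH H3 b1 by (intro powr_mono2') auto
          then have "\<epsilon> * real_of_int H powr (-\<beta>) \<le> U q" using Ul e0
            by (smt (verit) mult_left_mono)
          then have "K * (\<epsilon> * real_of_int H powr (-\<beta>)) \<le> K * U q" using K0 by (intro mult_left_mono) auto
          moreover have "K * (\<epsilon> * real_of_int H powr (-\<beta>)) = 1"
            using e0 H3 by (simp add: K_def powr_minus field_simps)
          ultimately show ?thesis by simp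
        qed
        then show ?thesis using True by (simp add: G_def)
      next
        case False then show ?thesis by (simp add: G_def)
      qed
      then show ?thesis using U0 K0 by simp
    qed
    have SH: "U (a+1, b) + U (a-1, b) + U (a, b+1) + U (a, b-1) \<le> 4 * U (a, b)"
    proof -
      have "real_of_int b \<ge> 3" using bH H3 by linarith
      moreover have "128 \<le> \<epsilon> * (real_of_int b - 1)"
        using He bH e0 by (smt (verit) mult_left_mono of_int_le_iff)
      ultimately show ?thesis using superharm[OF _ b2 e0, of "real_of_int b" "real_of_int a"] b1
        by (simp add: U_def)
    qed
    have "(\<Sum>e\<in>steps. G (padd p e)) \<le> ennreal (K * U (a+1, b)) + ennreal (K * U (a-1, b)) + ennreal (K * U (a, b+1)) + ennreal (K * U (a, b-1))"
      unfolding sum4 using gq by (intro add_mono) auto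
    also have "\<dots> = ennreal (K * (U (a+1, b) + U (a-1, b) + U (a, b+1) + U (a, b-1)))"
      using gq by (simp add: algebra_simps del: ennreal_plus add: ennreal_plus[symmetric])
    also have "\<dots> \<le> ennreal (K * (4 * U (a, b)))" using SH K0 by (intro ennreal_leI mult_left_mono) auto
    finally have "(\<Sum>e\<in>steps. G (padd p e)) / 4 \<le> ennreal (K * (4 * U (a, b))) / 4"
      by (rule divide_right_mono_ennreal)
    also have "\<dots> = ennreal (K * U (a, b))"
    proof -
      have "U (a, b) \<ge> \<epsilon> * real_of_int b powr (-\<beta>)"
        using Ulow[of "(a, b)"] bH H3 cab by auto
      then have "0 \<le> U (a, b)" using e0
        by (meson mult_nonneg_nonneg order.trans less_imp_le powr_ge_zero)
      then have "0 \<le> K * (4 * U (a, b))" using K0 by simp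
      then have "ennreal (K * (4 * U (a, b))) / ennreal 4 = ennreal (K * (4 * U (a, b)) / 4)"
        by (intro divide_ennreal) auto
      then show ?thesis by simp
    qed
    also have "\<dots> = G p" using p ab pB by (simp add: G_def T_def)
    finally show "(\<Sum>e\<in>steps. G (padd p e)) / 4 \<le> G p" .
  qed
  have EvB: "emeasure srw_space {w\<in>space srw_space. Ev D T p w} \<le> G p" for p
    by (rule Ev_bound[OF GT GD])
  define bnd where "bnd = (\<lambda>N::nat. (2 * real N / c + 1) * (K * real N powr (-\<beta>)))"
  have zbound: "hit_at (B \<union> hline 0) z x \<le> ennreal (K * real N powr (-\<beta>))"
    if N: "int N \<ge> H" and z: "z \<in> hline (int N) - B" for N z
  proof -
    have zs: "snd z = int N" using z by (simp add: hline_def)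
    have "hit_at (B \<union> hline 0) z x \<le> emeasure srw_space {w\<in>space srw_space. Ev D T z w}"
      unfolding hit_at_def D_def T_def
      by (rule emeasure_mono[OF hit_sub_Ev[OF xB Hx]]) (use zs N in \<open>auto simp: D_def[symmetric] T_def[symmetric]\<close>)
    also have "\<dots> \<le> G z" by (rule EvB)
    also have "\<dots> = ennreal (K * U z)" using z zs N by (simp add: G_def)
    also have "\<dots> \<le> ennreal (K * real N powr (-\<beta>))"
    proof (rule ennreal_leI, rule mult_left_mono)
      show "U z \<le> real N powr (-\<beta>)" unfolding U_def using uup[of "real_of_int (snd z)"] zs N H3 by simp
    qed (use K0 in simp)
    finally show ?thesis .
  qed
  have Nbound: "harm_N B N x \<le> ennreal (bnd N)" if N: "int N \<ge> H" for N
  proof -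
    define f where "f = \<lfloor>real N / c\<rfloor>"
    define S where "S = hline (int N) - B"
    have SS: "S \<subseteq> (\<lambda>a. (a, int N)) ` {-f..f}"
    proof
      fix z assume z: "z \<in> S"
      then have "z \<in> D" using N by (auto simp: S_def D_def hline_def)
      then have "c * \<bar>real_of_int (fst z)\<bar> < real_of_int (snd z)" by (rule coneD)
      moreover have "snd z = int N" using z by (simp add: S_def hline_def)
      ultimately have "\<bar>real_of_int (fst z)\<bar> \<le> real N / c" using c by (simp add: field_simps)
      then have "\<bar>fst z\<bar> \<le> f" unfolding f_def by (simp add: le_floor_iff)
      then show "z \<in> (\<lambda>a. (a, int N)) ` {-f..f}" using \<open>snd z = int N\<close>
        by (intro image_eqI[of _ _ "fst z"]) (auto simp: prod_eq_iff)
    qed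
    have finS: "finite S" by (rule finite_subset[OF SS]) simp
    have cardS: "real (card S) \<le> 2 * real N / c + 1"
    proof -
      have "card S \<le> card ((\<lambda>a. (a, int N)) ` {-f..f})" by (rule card_mono) (use SS in auto)
      also have "\<dots> \<le> card {-f..f}" by (rule card_image_le) simp
      also have "\<dots> = nat (2 * f + 1)" by simp
      finally have "real (card S) \<le> real (nat (2 * f + 1))" by simp
      also have "\<dots> \<le> 2 * real N / c + 1"
      proof -
        have "real_of_int f \<le> real N / c" unfolding f_def by simp
        moreover have "0 \<le> real N / c" using c by simp
        ultimately show ?thesis by (cases "0 \<le> 2 * f + 1") auto
      qed
      finally show ?thesis .
    qed
    have "harm_N B N x = (\<Sum>z\<in>S. hit_at (B \<union> hline 0) z x)"
      unfolding harm_N_def S_def[symmetric] using finS by simp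
    also have "\<dots> \<le> of_nat (card S) * ennreal (K * real N powr (-\<beta>))"
      by (rule sum_bounded_above) (use zbound N in \<open>auto simp: S_def\<close>)
    also have "\<dots> = ennreal (real (card S) * (K * real N powr (-\<beta>)))"
      using K0 by (simp add: ennreal_mult ennreal_of_nat_eq_real_of_nat)
    also have "\<dots> \<le> ennreal (bnd N)" unfolding bnd_def
      using cardS K0 by (intro ennreal_leI mult_right_mono) auto
    finally show ?thesis .
  qed
  have blim: "bnd \<longlonglongrightarrow> 0"
  proof -
    have lim1: "(\<lambda>N. K * (2 / c * real N powr (1 - \<beta>) + real N powr (-\<beta>))) \<longlonglongrightarrow> K * (2 / c * 0 + 0)"
      using b1 by (intro tendsto_intros tendsto_neg_powr filterlim_real_sequentially) auto
    have ev: "\<forall>\<^sub>F N in sequentially. K * (2 / c * real N powr (1 - \<beta>) + real N powr (-\<beta>)) = bnd N"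
    proof (rule eventually_sequentiallyI[of 1])
      fix N :: nat assume "1 \<le> N"
      have "real N powr (1 + (-\<beta>)) = real N powr 1 * real N powr (-\<beta>)"
        by (rule powr_add)
      then have "real N * real N powr (-\<beta>) = real N powr (1 - \<beta>)"
        using \<open>1 \<le> N\<close> by simp
      then show "K * (2 / c * real N powr (1 - \<beta>) + real N powr (-\<beta>)) = bnd N"
        unfolding bnd_def by (simp add: algebra_simps)
    qed
    show ?thesis using Lim_transform_eventually[OF lim1 ev] by simp
  qed
  show ?thesis
  proof (rule tendsto_sandwich[where f="\<lambda>_. 0" and h="\<lambda>N. ennreal (bnd N)"])
    show "\<forall>\<^sub>F N in sequentially. 0 \<le> harm_N B N x" by simp
    show "\<forall>\<^sub>F N in sequentially. harm_N B N x \<le> ennreal (bnd N)"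
      using Nbound by (intro eventually_sequentiallyI[of "nat H"]) auto
    show "(\<lambda>_. 0::ennreal) \<longlonglongrightarrow> 0" by simp
    show "(\<lambda>N. ennreal (bnd N)) \<longlonglongrightarrow> 0" using tendsto_ennrealI[OF blim] by simp
  qed
qed

end
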